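(* Let $d_0 \geq 2$ and $n\ge 6$, and let $\mathcal{H}$ be a $[3]$-graph on $n$ vertices such that every pair $u,v$ of non-adjacent vertices satisfies $d_{\partial \mathcal{H}}(u) + d_{\partial \mathcal{H}}(v) \geq n + d_0$. Suppose $\mathcal{H}$ contains a Hamiltonian Berge path but no Hamiltonian Berge cycle. Then $\mathcal{H}$ contains a Berge cycle of length $n-1$ or $n-2$.
   Context: A $[3]$-graph is a hypergraph in which every edge has at most $3$ vertices. Two distinct vertices are adjacent if some edge contains both; $d_{\partial\mathcal{H}}(u)$ is the number of vertices adjacent to $u$. A Berge path of length $t$ is a sequence of $t$ distinct edges $e_1,\dots,e_t$ and $t+1$ distinct vertices $v_1,\dots,v_{t+1}$ with $\{v_i,v_{i+1}\}\subseteq e_i$ for all $i$; it is Hamiltonian if $\{v_1,\dots,v_{t+1}\}=V(\mathcal{H})$. A Berge cycle of length $t$ is a collection of $t$ distinct edges $e_1,\dots,e_t$ and $t$ distinct vertices $v_1,\dots,v_t$ with $\{v_i,v_{i+1}\}\subseteq e_i$ for all $i\in[t]$, where $v_{t+1}=v_1$; it is Hamiltonian if it has length $n$. *)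

theory Defs
  imports Main
begin

definition is_3graph :: "'a set \<Rightarrow> 'a set set \<Rightarrow> bool" where
  "is_3graph V E \<longleftrightarrow> finite V \<and> (\<forall>e\<in>E. e \<subseteq> V \<and> card e \<le> 3)"

definition hadj :: "'a set set \<Rightarrow> 'a \<Rightarrow> 'a \<Rightarrow> bool" where
  "hadj E u v \<longleftrightarrow> u \<noteq> v \<and> (\<exists>e\<in>E. {u, v} \<subseteq> e)"

definition shadow_deg :: "'a set \<Rightarrow> 'a set set \<Rightarrow> 'a \<Rightarrow> nat" where
  "shadow_deg V E u = card {v \<in> V. hadj E u v}"

definition berge_path :: "'a set \<Rightarrow> 'a set set \<Rightarrow> 'a set list \<Rightarrow> 'a list \<Rightarrow> bool" where
  "berge_path V E es vs \<longleftrightarrow>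
     length vs = length es + 1 \<and> distinct es \<and> distinct vs \<and>
     set es \<subseteq> E \<and> set vs \<subseteq> V \<and>
     (\<forall>i < length es. {vs ! i, vs ! (i + 1)} \<subseteq> es ! i)"

definition ham_berge_path :: "'a set \<Rightarrow> 'a set set \<Rightarrow> bool" where
  "ham_berge_path V E \<longleftrightarrow> (\<exists>es vs. berge_path V E es vs \<and> set vs = V)"

definition berge_cycle :: "'a set \<Rightarrow> 'a set set \<Rightarrow> nat \<Rightarrow> 'a set list \<Rightarrow> 'a list \<Rightarrow> bool" where
  "berge_cycle V E t es vs \<longleftrightarrow>
     length es = t \<and> length vs = t \<and> distinct es \<and> distinct vs \<and>
     set es \<subseteq> E \<and> set vs \<subseteq> V \<and>
     (\<forall>i < t. {vs ! i, vs ! ((i + 1) mod t)} \<subseteq> es ! i)"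

definition has_berge_cycle :: "'a set \<Rightarrow> 'a set set \<Rightarrow> nat \<Rightarrow> bool" where
  "has_berge_cycle V E t \<longleftrightarrow> (\<exists>es vs. berge_cycle V E t es vs)"

end

theory Submission imports Defs begin

lemma bp_close:
  assumes "berge_path V E es vs" "f \<in> E" "f \<notin> set es" "{last vs, hd vs} \<subseteq> f"
  shows "berge_cycle V E (length vs) (es @ [f]) vs"
proof -
  have L: "length vs = length es + 1" and ne: "vs \<noteq> []" using assms(1) unfolding berge_path_def by auto
  have "{vs ! i, vs ! ((i + 1) mod length vs)} \<subseteq> (es @ [f]) ! i" if "i < length vs" for i
  proof (cases "i < length es")
    case True
    then show ?thesis using assms(1) L unfolding berge_path_def by (auto simp: nth_append)
  next
    case False
    then have "i = length es" using that L by auto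
    then show ?thesis using assms(4) L ne by (auto simp: last_conv_nth hd_conv_nth)
  qed
  then show ?thesis using assms L unfolding berge_path_def berge_cycle_def by auto
qed

lemma bp_join:
  assumes "berge_path V E es1 vs1" "berge_path V E es2 vs2"
    "set vs1 \<inter> set vs2 = {}" "set es1 \<inter> set es2 = {}" "g \<in> E" "g \<notin> set es1" "g \<notin> set es2"
    "{last vs1, hd vs2} \<subseteq> g"
  shows "berge_path V E (es1 @ g # es2) (vs1 @ vs2)"
proof -
  have L1: "length vs1 = length es1 + 1" and L2: "length vs2 = length es2 + 1"
    and ne1: "vs1 \<noteq> []" and ne2: "vs2 \<noteq> []" using assms(1,2) unfolding berge_path_def by auto
  have "{(vs1 @ vs2) ! i, (vs1 @ vs2) ! (i + 1)} \<subseteq> (es1 @ g # es2) ! i" if "i < length (es1 @ g # es2)" for i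
  proof -
    consider "i < length es1" | "i = length es1" | "i > length es1" by linarith
    then show ?thesis
    proof cases
      case 1
      then have "{vs1 ! i, vs1 ! (i+1)} \<subseteq> es1 ! i" using assms(1) unfolding berge_path_def by auto
      moreover have "(vs1 @ vs2) ! i = vs1 ! i" "(vs1 @ vs2) ! (i+1) = vs1 ! (i+1)" "(es1 @ g # es2) ! i = es1 ! i"
        using 1 L1 by (simp_all add: nth_append)
      ultimately show ?thesis by simp
    next
      case 2
      have "(vs1 @ vs2) ! i = last vs1" using 2 L1 ne1 by (simp add: nth_append last_conv_nth)
      moreover have "(vs1 @ vs2) ! (i+1) = hd vs2" using 2 L1 ne2 by (simp add: nth_append hd_conv_nth)
      moreover have "(es1 @ g # es2) ! i = g" using 2 by (simp add: nth_append)
      ultimately show ?thesis using assms(8) by (simp only:)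
    next
      case 3
      define k where "k = i - length es1 - 1"
      have k: "i = length es1 + 1 + k" using 3 unfolding k_def by simp
      have "k < length es2" using that k by auto
      then have "{vs2 ! k, vs2 ! (k+1)} \<subseteq> es2 ! k" using assms(2) unfolding berge_path_def by auto
      moreover have "(vs1 @ vs2) ! i = vs2 ! k" "(vs1 @ vs2) ! (i+1) = vs2 ! (k+1)" "(es1 @ g # es2) ! i = es2 ! k"
        using k L1 by (simp_all add: nth_append)
      ultimately show ?thesis by simp
    qed
  qed
  then show ?thesis using assms L1 L2 unfolding berge_path_def by auto
qed

lemma bp_rev:
  assumes "berge_path V E es vs"
  shows "berge_path V E (rev es) (rev vs)"
proof -
  have L: "length vs = length es + 1" using assms unfolding berge_path_def by auto
  have "{rev vs ! i, rev vs ! (i + 1)} \<subseteq> rev es ! i" if "i < length es" for i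
  proof -
    let ?k = "length es - 1 - i"
    have "{vs ! ?k, vs ! (?k+1)} \<subseteq> es ! ?k" using assms that unfolding berge_path_def by auto
    moreover have "rev vs ! i = vs ! (?k+1)" "rev vs ! (i+1) = vs ! ?k" "rev es ! i = es ! ?k"
      using that L by (auto simp: rev_nth Suc_diff_Suc)
    ultimately show ?thesis by auto
  qed
  then show ?thesis using assms L unfolding berge_path_def by auto
qed

lemma bp_take:
  assumes "berge_path V E es vs" "k \<le> length es"
  shows "berge_path V E (take k es) (take (k+1) vs)"
  using assms unfolding berge_path_def by (auto dest: in_set_takeD)

lemma bp_drop:
  assumes "berge_path V E es vs" "k \<le> length es"
  shows "berge_path V E (drop k es) (drop k vs)"
proof -
  have "{drop k vs ! i, drop k vs ! (i + 1)} \<subseteq> drop k es ! i" if "i < length (drop k es)" for i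
  proof -
    have "{vs ! (k+i), vs ! (k+i+1)} \<subseteq> es ! (k+i)" using assms that unfolding berge_path_def by auto
    then show ?thesis using assms that unfolding berge_path_def by auto
  qed
  then show ?thesis using assms unfolding berge_path_def by (auto dest: in_set_dropD)
qed


lemma bp_len: "berge_path V E es vs \<Longrightarrow> length vs = length es + 1"
  unfolding berge_path_def by auto

lemma crossing:
  assumes P: "berge_path V E es vs" and n: "length vs = n" and ab: "a < b" "b < n"
    and gE: "g \<in> E" and fE: "f \<in> E" and g: "{vs ! a, vs ! (n - 1)} \<subseteq> g" and f: "{vs ! b, vs ! 0} \<subseteq> f"
    and g1: "g \<notin> set (take a es)" and g2: "g \<notin> set (drop b es)"
    and f1: "f \<notin> set (take a es)" and f2: "f \<notin> set (drop b es)" and fg: "f \<noteq> g"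
  shows "has_berge_cycle V E (a + 1 + (n - b))"
proof -
  have L: "length vs = length es + 1" using P bp_len by blast
  have d: "distinct vs" "distinct es" using P unfolding berge_path_def by auto
  have P1: "berge_path V E (take a es) (take (a+1) vs)" using bp_take[OF P, of a] ab n L by auto
  have P2: "berge_path V E (rev (drop b es)) (rev (drop b vs))" using bp_rev[OF bp_drop[OF P, of b]] ab n L by auto
  have "set (take (a+1) vs) \<inter> set (rev (drop b vs)) = {}"
    using set_take_disj_set_drop_if_distinct[OF d(1), of "a+1" b] ab by auto
  moreover have "set (take a es) \<inter> set (rev (drop b es)) = {}"
    using set_take_disj_set_drop_if_distinct[OF d(2), of a b] ab by auto
  moreover have "last (take (a+1) vs) = vs ! a" proof -
    have "take (a+1) vs \<noteq> []" using ab n by auto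
    then show ?thesis using ab n by (simp add: last_conv_nth)
  qed
  moreover have "hd (rev (drop b vs)) = vs ! (n - 1)" using ab n
    by (simp add: hd_rev last_conv_nth)
  ultimately have P3: "berge_path V E (take a es @ g # rev (drop b es)) (take (a+1) vs @ rev (drop b vs))"
    using bp_join[OF P1 P2] gE g g1 g2 by auto
  have "last (take (a+1) vs @ rev (drop b vs)) = vs ! b" using ab n
    by (simp add: last_rev hd_conv_nth)
  moreover have "hd (take (a+1) vs @ rev (drop b vs)) = vs ! 0" using ab n
    by (cases vs) auto
  ultimately have "berge_cycle V E (length (take (a+1) vs @ rev (drop b vs)))
      ((take a es @ g # rev (drop b es)) @ [f]) (take (a+1) vs @ rev (drop b vs))"
    using bp_close[OF P3] fE f f1 f2 fg by auto
  moreover have "length (take (a+1) vs @ rev (drop b vs)) = a + 1 + (n - b)" using ab n by simp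
  ultimately show ?thesis unfolding has_berge_cycle_def by metis
qed

lemma four_idx:
  assumes "is_3graph V E" "e \<in> E" "distinct vs" "p < length vs" "q < length vs" "r < length vs" "s < length vs"
    "distinct [p,q,r,s]" "{vs ! p, vs ! q, vs ! r, vs ! s} \<subseteq> e"
  shows False
proof -
  have fin: "finite e" "card e \<le> 3" using assms(1,2) unfolding is_3graph_def by (auto intro: finite_subset)
  have "distinct [vs ! p, vs ! q, vs ! r, vs ! s]" using assms(3-8) by (auto simp: nth_eq_iff_index_eq)
  then have "card {vs ! p, vs ! q, vs ! r, vs ! s} = 4" by simp
  then have "4 \<le> card e" using card_mono[OF fin(1) assms(9)] by simp
  then show False using fin by simp
qed

lemma not_in_take: "distinct es \<Longrightarrow> k < length es \<Longrightarrow> a \<le> k \<Longrightarrow> es ! k \<notin> set (take a es)"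
  by (auto simp: in_set_conv_nth nth_eq_iff_index_eq)

lemma not_in_drop: "distinct es \<Longrightarrow> k < length es \<Longrightarrow> k < b \<Longrightarrow> es ! k \<notin> set (drop b es)"
  by (auto simp: in_set_conv_nth nth_eq_iff_index_eq)

lemma hadj_sym: "hadj E u v = hadj E v u"
  unfolding hadj_def by (auto simp: insert_commute)


theorem claim2p1:
  fixes V :: "'a set" and E :: "'a set set" and n d0 :: nat
  assumes "d0 \<ge> 2" and "n \<ge> 6"
    and "is_3graph V E" and "card V = n"
    and "\<forall>u\<in>V. \<forall>v\<in>V. u \<noteq> v \<and> \<not> hadj E u v \<longrightarrow>
           shadow_deg V E u + shadow_deg V E v \<ge> n + d0"
    and "ham_berge_path V E"
    and "\<not> has_berge_cycle V E n"
  shows "has_berge_cycle V E (n - 1) \<or> has_berge_cycle V E (n - 2)"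
proof -
  obtain es vs where P: "berge_path V E es vs" and sv: "set vs = V"
    using assms(6) unfolding ham_berge_path_def by auto
  have dv: "distinct vs" and de: "distinct es" using P unfolding berge_path_def by auto
  have ln: "length vs = n" using distinct_card[OF dv] sv assms(4) by simp
  have le: "length es = n - 1" using bp_len[OF P] ln by simp
  have path: "{vs ! i, vs ! (i+1)} \<subseteq> es ! i" if "i < n - 1" for i
    using P that le unfolding berge_path_def by auto
  have esE: "es ! i \<in> E" if "i < n - 1" for i
    using P that le unfolding berge_path_def by auto
  have vne: "vs \<noteq> []" using ln assms(2) by auto
  have lastv: "last vs = vs ! (n - 1)" using vne ln by (simp add: last_conv_nth)
  have inV: "vs ! i \<in> V" if "i < n" for i using sv ln that by auto
  have G3: "is_3graph V E" by fact
  have n21: "n - 2 < n - 1" using assms(2) by arith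
  have n6: "n \<ge> 6" by fact
  show ?thesis
  proof (cases "hadj E (vs ! 0) (vs ! (n - 1))")
    case True
    then obtain f where fE: "f \<in> E" and f: "{vs ! 0, vs ! (n - 1)} \<subseteq> f"
      unfolding hadj_def by auto
    have "f \<in> set es"
    proof (rule ccontr)
      assume "f \<notin> set es"
      moreover have "vs \<noteq> []" using ln n6 by auto
      then have "last vs = vs ! (n - 1)" "hd vs = vs ! 0" using ln
        by (auto simp: last_conv_nth hd_conv_nth)
      ultimately have "berge_cycle V E (length vs) (es @ [f]) vs"
        using bp_close[OF P fE] f by auto
      then show False using assms(7) ln unfolding has_berge_cycle_def by auto
    qed
    then obtain j where j: "j < n - 1" "f = es ! j" using le by (auto simp: in_set_conv_nth)
    have "j = 0 \<or> j = n - 2"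
    proof (rule ccontr)
      assume a: "\<not> (j = 0 \<or> j = n - 2)"
      then have "distinct [j, j+1, 0, n - 1]" using j n6 by auto
      then show False
        using four_idx[OF G3 fE dv, of j "j+1" 0 "n - 1"] j path[of j] f ln n6 by auto
    qed
    then show ?thesis
    proof
      assume j0: "j = 0"
      have P': "berge_path V E (drop 1 es) (drop 1 vs)" using bp_drop[OF P, of 1] le n6 by simp
      have nd: "es ! 0 \<notin> set (drop 1 es)" using not_in_drop[OF de, of 0 1] le n6 by simp
      have "drop 1 vs \<noteq> []" using ln n6 by auto
      have "last (drop 1 vs) = last vs" using ln n6 by (intro last_drop) auto
      also note lastv
      finally have "last (drop 1 vs) = vs ! (n - 1)" .
      moreover have "hd (drop 1 vs) = vs ! 1" using ln n6 \<open>drop 1 vs \<noteq> []\<close>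
        by (auto simp: hd_conv_nth)
      moreover have "{vs ! (n - 1), vs ! 1} \<subseteq> es ! 0" using f j j0 path[of 0] n6 by auto
      moreover note nd
      ultimately have "berge_cycle V E (length (drop 1 vs)) (drop 1 es @ [es ! 0]) (drop 1 vs)"
        using bp_close[OF P' esE[of 0]] n6 by auto
      then show ?thesis using ln unfolding has_berge_cycle_def by auto
    next
      assume jn: "j = n - 2"
      have P': "berge_path V E (take (n - 2) es) (take (n - 2 + 1) vs)" using bp_take[OF P, of "n - 2"] le n6 by simp
      have "es ! (n - 2) \<notin> set (take (n - 2) es)" using not_in_take[OF de, of "n - 2" "n - 2"] le n6 by simp
      moreover have "take (n - 2 + 1) vs \<noteq> []" using ln n6 by auto
      then have "last (take (n - 2 + 1) vs) = vs ! (n - 2)" "hd (take (n - 2 + 1) vs) = vs ! 0" using ln n6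
        by (auto simp: last_conv_nth hd_conv_nth)
      moreover have "{vs ! (n - 2), vs ! 0} \<subseteq> es ! (n - 2)" using f j jn path[of "n - 2"] n6 by auto
      ultimately have "berge_cycle V E (length (take (n - 2 + 1) vs)) (take (n - 2) es @ [es ! (n - 2)]) (take (n - 2 + 1) vs)"
        using bp_close[OF P' esE[of "n - 2"]] n6 by auto
      moreover have "length (take (n - 2 + 1) vs) = n - 1" using ln n6 by simp
      ultimately show ?thesis unfolding has_berge_cycle_def by metis
    qed
  next
    case False
    note nadj = False
    have nadj': "\<not> hadj E (vs ! (n - 1)) (vs ! 0)" using nadj hadj_sym by metis
    define I where "I = {i. i < n - 1 \<and> hadj E (vs ! 0) (vs ! (i+1))}"
    define J where "J = {i. i < n - 1 \<and> hadj E (vs ! (n - 1)) (vs ! i)}"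
    have cI: "card I = shadow_deg V E (vs ! 0)"
    proof -
      have inj: "inj_on (\<lambda>i. vs ! (i+1)) I" unfolding I_def inj_on_def using dv ln
        by (auto simp: nth_eq_iff_index_eq)
      have img: "(\<lambda>i. vs ! (i+1)) ` I = {v\<in>V. hadj E (vs ! 0) v}"
      proof
        show "(\<lambda>i. vs ! (i+1)) ` I \<subseteq> {v\<in>V. hadj E (vs ! 0) v}" using inV unfolding I_def by auto
        show "{v\<in>V. hadj E (vs ! 0) v} \<subseteq> (\<lambda>i. vs ! (i+1)) ` I"
        proof
          fix v assume v: "v \<in> {v\<in>V. hadj E (vs ! 0) v}"
          then obtain k where k: "k < n" "v = vs ! k" using sv ln by (auto simp: in_set_conv_nth)
          have "k \<noteq> 0"
          proof
            assume "k = 0" then show False using v k unfolding hadj_def by auto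
          qed
          then have "k - 1 \<in> I" "v = vs ! (k - 1 + 1)" using k v unfolding I_def by auto
          then show "v \<in> (\<lambda>i. vs ! (i+1)) ` I" by blast
        qed
      qed
      show ?thesis unfolding shadow_deg_def using card_image[OF inj] img by simp
    qed
    have cJ: "card J = shadow_deg V E (vs ! (n - 1))"
    proof -
      have inj: "inj_on (\<lambda>i. vs ! i) J" unfolding J_def inj_on_def using dv ln
        by (auto simp: nth_eq_iff_index_eq)
      have img: "(\<lambda>i. vs ! i) ` J = {v\<in>V. hadj E (vs ! (n - 1)) v}"
      proof
        show "(\<lambda>i. vs ! i) ` J \<subseteq> {v\<in>V. hadj E (vs ! (n - 1)) v}" using inV unfolding J_def by auto
        show "{v\<in>V. hadj E (vs ! (n - 1)) v} \<subseteq> (\<lambda>i. vs ! i) ` J"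
        proof
          fix v assume v: "v \<in> {v\<in>V. hadj E (vs ! (n - 1)) v}"
          then obtain k where k: "k < n" "v = vs ! k" using sv ln by (auto simp: in_set_conv_nth)
          have "k \<noteq> n - 1"
          proof
            assume "k = n - 1" then show False using v k unfolding hadj_def by auto
          qed
          then have "k \<in> J" using k v unfolding J_def by auto
          then show "v \<in> (\<lambda>i. vs ! i) ` J" using k by blast
        qed
      qed
      show ?thesis unfolding shadow_deg_def using card_image[OF inj] img by simp
    qed
    have d0n: "vs ! 0 \<noteq> vs ! (n - 1)" using dv ln n6 by (simp add: nth_eq_iff_index_eq)
    have sumIJ: "card I + card J \<ge> n + 2"
      using assms(5) inV[of 0] inV[of "n - 1"] n6 nadj d0n assms(1) cI cJ by fastforce
    have finI: "finite I" and finJ: "finite J" unfolding I_def J_def by auto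
    have "I \<union> J \<subseteq> {..<n - 1}" unfolding I_def J_def by auto
    then have "card (I \<union> J) \<le> n - 1" using card_mono[of "{..<n - 1}" "I \<union> J"] by simp
    define K where "K = I \<inter> J"
    have cK: "card K \<ge> 3" using card_Un_Int[OF finI finJ] sumIJ \<open>card (I \<union> J) \<le> n - 1\<close> n6
      unfolding K_def by linarith
    have finK: "finite K" using finI unfolding K_def by auto
    have Kp: "1 \<le> i \<and> i + 3 \<le> n \<and> hadj E (vs ! 0) (vs ! (i+1)) \<and> hadj E (vs ! (n - 1)) (vs ! i)"
      if "i \<in> K" for i
    proof -
      have h: "i < n - 1" "hadj E (vs ! 0) (vs ! (i+1))" "hadj E (vs ! (n - 1)) (vs ! i)"
        using that unfolding K_def I_def J_def by auto
      have "i \<noteq> 0"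
      proof
        assume "i = 0" then show False using h nadj' by auto
      qed
      moreover have "i + 1 \<noteq> n - 1"
      proof
        assume "i + 1 = n - 1" then show False using h nadj by auto
      qed
      ultimately show ?thesis using h by auto
    qed
    define BF where "BF = {i\<in>K. vs ! (i+1) \<in> es ! 0}"
    define BG where "BG = {i\<in>K. vs ! i \<in> es ! (n - 2)}"
    have cBF: "card BF \<le> 1"
    proof -
      have "i = i'" if "i \<in> BF" "i' \<in> BF" for i i'
      proof (rule ccontr)
        assume ne: "i \<noteq> i'"
        have "1 \<le> i" "1 \<le> i'" "i + 3 \<le> n" "i' + 3 \<le> n" using Kp that unfolding BF_def by auto
        then have "distinct [0, 1, i+1, i'+1]" using ne by auto
        moreover have "{vs ! 0, vs ! 1, vs ! (i+1), vs ! (i'+1)} \<subseteq> es ! 0"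
          using that path[of 0] n6 unfolding BF_def by auto
        ultimately show False using four_idx[OF G3 esE[of 0] dv, of 0 1 "i+1" "i'+1"] ln n6
          \<open>i + 3 \<le> n\<close> \<open>i' + 3 \<le> n\<close> by auto
      qed
      then show ?thesis using card_le_Suc0_iff_eq[of BF] finK unfolding BF_def by auto
    qed
    have cBG: "card BG \<le> 1"
    proof -
      have "i = i'" if "i \<in> BG" "i' \<in> BG" for i i'
      proof (rule ccontr)
        assume ne: "i \<noteq> i'"
        have "1 \<le> i" "1 \<le> i'" "i + 3 \<le> n" "i' + 3 \<le> n" using Kp that unfolding BG_def by auto
        then have "distinct [n - 2, n - 1, i, i']" using ne by auto
        moreover have "{vs ! (n - 2), vs ! (n - 1), vs ! i, vs ! i'} \<subseteq> es ! (n - 2)"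
          using that path[of "n - 2"] n6 unfolding BG_def by (auto simp: Suc_diff_Suc numeral_2_eq_2)
        ultimately show False using four_idx[OF G3 esE[OF n21] dv, of "n - 2" "n - 1" i i'] ln n6
          \<open>i + 3 \<le> n\<close> \<open>i' + 3 \<le> n\<close> by auto
      qed
      then show ?thesis using card_le_Suc0_iff_eq[of BG] finK unfolding BG_def by auto
    qed
    have "K \<subseteq> (K - BF - BG) \<union> BF \<union> BG" by auto
    have finBF: "finite BF" and finBG: "finite BG" using finK unfolding BF_def BG_def by auto
    have "card K \<le> card ((K - BF - BG) \<union> BF \<union> BG)"
      using card_mono[of "(K - BF - BG) \<union> BF \<union> BG" K] finK finBF finBG \<open>K \<subseteq> _\<close> by blast
    also have "\<dots> \<le> card ((K - BF - BG) \<union> BF) + card BG" by (rule card_Un_le)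
    also have "\<dots> \<le> card (K - BF - BG) + card BF + card BG" using card_Un_le[of "K - BF - BG" BF] by simp
    finally have "card K \<le> card (K - BF - BG) + card BF + card BG" .
    then have "card (K - BF - BG) > 0" using cK cBF cBG by linarith
    then have "K - BF - BG \<noteq> {}" by (metis card.empty less_irrefl)
    then obtain i where iK: "i \<in> K" and iBF: "i \<notin> BF" and iBG: "i \<notin> BG" by auto
    have i1: "1 \<le> i" and i3: "i + 3 \<le> n" using Kp[OF iK] by auto
    obtain f where fE: "f \<in> E" and f: "{vs ! 0, vs ! (i+1)} \<subseteq> f" using Kp[OF iK] unfolding hadj_def by auto
    obtain g where gE: "g \<in> E" and g: "{vs ! (n - 1), vs ! i} \<subseteq> g" using Kp[OF iK] unfolding hadj_def by auto
    have fg: "f \<noteq> g" using f g nadj d0n unfolding hadj_def by (metis gE insert_subset)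
    have fc: "f \<notin> set es \<or> f = es ! i \<or> f = es ! (i+1)"
    proof (rule ccontr)
      assume a: "\<not> ?thesis"
      then obtain j where j: "j < n - 1" "f = es ! j" using le by (auto simp: in_set_conv_nth)
      have "j \<noteq> i" "j \<noteq> i + 1" using a j by auto
      show False
      proof (cases "j = 0")
        case True
        then show False using iBF iK f j unfolding BF_def by auto
      next
        case False
        then have "distinct [j, j+1, 0, i+1]" using \<open>j \<noteq> i\<close> \<open>j \<noteq> i + 1\<close> by auto
        then show False by (rule four_idx[OF G3 fE dv, of j "j+1" 0 "i+1", rotated -2]) (use j path[of j] f ln i3 in auto)
      qed
    qed
    have gc: "g \<notin> set es \<or> g = es ! i \<or> g = es ! (i - 1)"
    proof (rule ccontr)
      assume a: "\<not> ?thesis"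
      then obtain j where j: "j < n - 1" "g = es ! j" using le by (auto simp: in_set_conv_nth)
      have "j \<noteq> i" "j \<noteq> i - 1" using a j by auto
      show False
      proof (cases "j = n - 2")
        case True
        then show False using iBG iK g j unfolding BG_def by auto
      next
        case False
        then have "distinct [j, j+1, n - 1, i]" using \<open>j \<noteq> i\<close> \<open>j \<noteq> i - 1\<close> j i1 i3 by auto
        then show False by (rule four_idx[OF G3 gE dv, of j "j+1" "n - 1" i, rotated -2]) (use j path[of j] g ln i3 in auto)
      qed
    qed
    obtain a where a: "a = i \<or> a = i - 1" "vs ! a \<in> g" "g \<notin> set (take a es)" "g \<notin> set (drop (i+1) es)"
    proof (cases "g = es ! (i - 1) \<and> g \<in> set es")
      case True
      have "vs ! (i - 1) \<in> g" using True path[of "i - 1"] i1 i3 by auto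
      moreover have "g \<notin> set (take (i - 1) es)" using True not_in_take[OF de, of "i - 1" "i - 1"] le i1 i3 by auto
      moreover have "g \<notin> set (drop (i+1) es)" using True not_in_drop[OF de, of "i - 1" "i+1"] le i1 i3 by auto
      ultimately show ?thesis using that by blast
    next
      case False
      then have "g \<notin> set es \<or> g = es ! i" using gc by auto
      moreover have "es ! i \<notin> set (take i es)" using not_in_take[OF de, of i i] le i3 by auto
      moreover have "es ! i \<notin> set (drop (i+1) es)" using not_in_drop[OF de, of i "i+1"] le i3 by auto
      ultimately have "g \<notin> set (take i es)" "g \<notin> set (drop (i+1) es)" by (auto dest: in_set_takeD in_set_dropD)
      then show ?thesis using that g by blast
    qed
    obtain b where b: "b = i + 1 \<or> b = i + 2" "vs ! b \<in> f" "f \<notin> set (take i es)" "f \<notin> set (drop b es)"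
    proof (cases "f = es ! (i + 1) \<and> f \<in> set es")
      case True
      have "vs ! (i + 2) \<in> f" using True path[of "i + 1"] i1 i3 by auto
      moreover have "f \<notin> set (take i es)" using True not_in_take[OF de, of "i + 1" i] le i1 i3 by auto
      moreover have "f \<notin> set (drop (i+2) es)" using True not_in_drop[OF de, of "i + 1" "i+2"] le i1 i3 by auto
      ultimately show ?thesis using that by blast
    next
      case False
      then have "f \<notin> set es \<or> f = es ! i" using fc by auto
      moreover have "es ! i \<notin> set (take i es)" using not_in_take[OF de, of i i] le i3 by auto
      moreover have "es ! i \<notin> set (drop (i+1) es)" using not_in_drop[OF de, of i "i+1"] le i3 by auto
      ultimately have "f \<notin> set (take i es)" "f \<notin> set (drop (i+1) es)" by (auto dest: in_set_takeD in_set_dropD)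
      then show ?thesis using that f by blast
    qed
    have g1: "g \<notin> set (take a es)" using a by blast
    have g2: "g \<notin> set (drop b es)" using a(4) set_drop_subset_set_drop[of "i+1" b es] b(1) by auto
    have f1: "f \<notin> set (take a es)" using b(3) set_take_subset_set_take[of a i es] a(1) by auto
    have f2: "f \<notin> set (drop b es)" using b by blast
    have cyc: "has_berge_cycle V E (a + 1 + (n - b))"
      using crossing[OF P ln _ _ gE fE _ _ g1 g2 f1 f2 fg] a b g f i1 i3 by auto
    have "a + 1 + (n - b) \<noteq> n" using cyc assms(7) by auto
    then have "a + 1 + (n - b) = n - 1 \<or> a + 1 + (n - b) = n - 2" using a(1) b(1) i1 i3 by auto
    then show ?thesis using cyc by auto
  qed
qed

end
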